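(* Let $k \geq 2$ be an integer. Let $\mathbb{R}^2_+=\{(x,y): y>0\}$ and $\mathbb{R}^2_-=\{(x,y): y<0\}$. Fix a $(k+1)$-element set $K=\{y_1,\ldots,y_{k+1}\} \subset \mathbb{R}^2_-$. Let $U$ be the family of all $k$-element subsets of $\mathbb{R}^2_-$, let $O$ be the initial ordinal of cardinality $\mathfrak{c}=2^{\aleph_0}$ (so $|O|=\mathfrak{c}$ and $|\{\alpha \in O: \alpha<\lambda\}|<\mathfrak{c}$ for every $\lambda\in O$), and let $\lambda \mapsto a^{\lambda}=\{a^{\lambda}_1,\ldots,a^{\lambda}_k\}$ be a bijection from $O$ onto $U$. Then there exist families of sets $\{A_\lambda\}_{\lambda\in O}$ and $\{B_\lambda\}_{\lambda \in O}$, increasing in the sense that $\lambda_1<\lambda_2$ implies $A_{\lambda_1}\subseteq A_{\lambda_2}$ and $B_{\lambda_1}\subseteq B_{\lambda_2}$, such that for every $\lambda \in O$: (1) $A_\lambda, B_\lambda \subset \{(x,0): x \in \mathbb{R}\}$; (2) $A_\lambda \cap B_\lambda=\emptyset$; (3) $|A_\lambda|,|B_\lambda| \leq \max(|\lambda|,\aleph_0) < \mathfrak{c}$; (4) there is a point $z \in \mathbb{R}^2_+$ that sees every point of $a^\lambda$ via $A_\lambda$, while no point $z\in\mathbb{R}^2_+$ sees all points of $K$ via $A_\lambda$.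
   Context: For $z \in \mathbb{R}^2_+$, $y \in \mathbb{R}^2_-$ and a subset $A$ of the $x$-axis, "$z$ sees $y$ via $A$" means that the segment $[z,y]$ is contained in $\mathbb{R}^2_+ \cup A \cup \mathbb{R}^2_-$ (equivalently, the intersection point of $[z,y]$ with the $x$-axis lies in $A$). For an ordinal $\lambda$, $|\lambda|$ denotes its cardinality (the cardinality of the set of ordinals smaller than $\lambda$). The axiom of choice is assumed. *)

theory Defs
  imports "HOL-Analysis.Analysis"
begin

definition upper_half :: "(real \<times> real) set" where
  "upper_half = {p. snd p > 0}"

definition lower_half :: "(real \<times> real) set" where
  "lower_half = {p. snd p < 0}"

definition x_axis :: "(real \<times> real) set" where
  "x_axis = {p. snd p = 0}"

definition sees_via :: "real \<times> real \<Rightarrow> real \<times> real \<Rightarrow> (real \<times> real) set \<Rightarrow> bool" where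
  "sees_via z y A \<longleftrightarrow> closed_segment z y \<subseteq> upper_half \<union> A \<union> lower_half"

end

theory Submission
  imports Defs "HOL-Computational_Algebra.Polynomial" "HOL-Library.Countable_Set_Type"
begin

definition proj :: "real \<times> real \<Rightarrow> real \<times> real \<Rightarrow> real" where
  "proj z y = (snd z * fst y - fst z * snd y) / (snd z - snd y)"

lemma sees_via_iff:
  assumes z: "snd z > 0" and y: "snd y < 0"
  shows "sees_via z y A \<longleftrightarrow> (proj z y, 0) \<in> A"
proof -
  define u where "u = snd z / (snd z - snd y)"
  have d: "snd z - snd y > 0" using z y by simp
  have u01: "0 \<le> u \<and> u \<le> 1" using z y d unfolding u_def by (auto simp: field_simps)
  have pt: "(1 - u) *\<^sub>R z + u *\<^sub>R y = (proj z y, 0)"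
  proof -
    have ne: "snd z - snd y \<noteq> 0" using d by simp
    have u1: "1 - u = - snd y / (snd z - snd y)" using ne unfolding u_def by (simp add: field_simps)
    have "fst ((1 - u) *\<^sub>R z + u *\<^sub>R y) = (1 - u) * fst z + u * fst y" by simp
    also have "\<dots> = (- snd y * fst z + snd z * fst y) / (snd z - snd y)"
      unfolding u1 by (simp add: u_def add_divide_distrib diff_divide_distrib algebra_simps)
    also have "\<dots> = proj z y" unfolding proj_def by (simp add: algebra_simps)
    finally have "fst ((1 - u) *\<^sub>R z + u *\<^sub>R y) = proj z y" .
    moreover have "snd ((1 - u) *\<^sub>R z + u *\<^sub>R y) = 0"
      using ne unfolding u_def by (simp add: field_simps)
    ultimately show ?thesis by (simp add: prod_eq_iff)
  qed
  have inseg: "(proj z y, 0) \<in> closed_segment z y"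
    unfolding closed_segment_def using u01 pt by (metis (mono_tags, lifting) mem_Collect_eq)
  show ?thesis
  proof
    assume "sees_via z y A"
    then have "(proj z y, 0) \<in> upper_half \<union> A \<union> lower_half"
      using inseg unfolding sees_via_def by blast
    then show "(proj z y, 0) \<in> A" unfolding upper_half_def lower_half_def by auto
  next
    assume A: "(proj z y, 0) \<in> A"
    show "sees_via z y A" unfolding sees_via_def
    proof
      fix p assume "p \<in> closed_segment z y"
      then obtain v where v: "0 \<le> v" "v \<le> 1" "p = (1 - v) *\<^sub>R z + v *\<^sub>R y"
        unfolding closed_segment_def by blast
      have sp: "snd p = (1 - v) * snd z + v * snd y" using v(3) by simp
      show "p \<in> upper_half \<union> A \<union> lower_half"
      proof (cases "snd p = 0")
        case True
        then have "v = u" using sp d unfolding u_def by (auto simp: field_simps)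
        then have "p = (proj z y, 0)" using v(3) pt by simp
        then show ?thesis using A by simp
      next
        case False
        then show ?thesis unfolding upper_half_def lower_half_def by auto
      qed
    qed
  qed
qed


lemma line_eq:
  assumes "snd z > 0" "snd y < 0" "proj z y = v"
  shows "snd y * fst z + (v - fst y) * snd z - snd y * v = 0"
proof -
  have ne: "snd z - snd y \<noteq> 0" using assms by simp
  have "v * (snd z - snd y) = snd z * fst y - fst z * snd y"
    using assms(3) ne unfolding proj_def by (simp add: field_simps)
  then show ?thesis by (simp add: algebra_simps)
qed

lemma proj_eq_iff:
  assumes "snd z > 0" "snd y < 0"
  shows "proj z y = v \<longleftrightarrow> snd y * fst z + (v - fst y) * snd z - snd y * v = 0"
proof
  assume "proj z y = v" then show "snd y * fst z + (v - fst y) * snd z - snd y * v = 0"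
    using line_eq assms by blast
next
  assume h: "snd y * fst z + (v - fst y) * snd z - snd y * v = 0"
  have ne: "snd z - snd y \<noteq> 0" using assms by simp
  have "v * (snd z - snd y) = snd z * fst y - fst z * snd y" using h by (simp add: algebra_simps)
  then show "proj z y = v" using ne unfolding proj_def by (simp add: field_simps)
qed

definition collv :: "(real \<times> real) set \<Rightarrow> real set" where
  "collv K = {c. \<exists>z y1 y2. snd z > 0 \<and> y1 \<in> K \<and> y2 \<in> K \<and> y1 \<noteq> y2 \<and> proj z y1 = c \<and> proj z y2 = c}"

lemma collv_finite:
  assumes "finite K" "K \<subseteq> lower_half"
  shows "finite (collv K)"
proof -
  have "collv K \<subseteq> (\<lambda>(y1,y2). (fst y1 * snd y2 - fst y2 * snd y1) / (snd y2 - snd y1)) ` (K \<times> K)"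
  proof
    fix c assume "c \<in> collv K"
    then obtain z y1 y2 where h: "snd z > 0" "y1 \<in> K" "y2 \<in> K" "y1 \<noteq> y2" "proj z y1 = c" "proj z y2 = c"
      unfolding collv_def by blast
    have l: "snd y1 < 0" "snd y2 < 0" using h assms(2) unfolding lower_half_def by auto
    have e1: "snd y1 * fst z + (c - fst y1) * snd z - snd y1 * c = 0" using line_eq h l by blast
    have e2: "snd y2 * fst z + (c - fst y2) * snd z - snd y2 * c = 0" using line_eq h l by blast
    have "snd z * ((c - fst y1) * snd y2 - (c - fst y2) * snd y1) = 0"
    proof -
      have "snd y2 * (snd y1 * fst z + (c - fst y1) * snd z - snd y1 * c) - snd y1 * (snd y2 * fst z + (c - fst y2) * snd z - snd y2 * c) = 0"
        using e1 e2 by simp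
      then show ?thesis by (simp add: algebra_simps)
    qed
    then have k: "(c - fst y1) * snd y2 = (c - fst y2) * snd y1" using h(1) by simp
    have "snd y2 \<noteq> snd y1"
    proof
      assume eq: "snd y2 = snd y1"
      then have "fst y1 = fst y2" using k l by (simp add: algebra_simps)
      then show False using eq h(4) by (simp add: prod_eq_iff)
    qed
    then have "c = (fst y1 * snd y2 - fst y2 * snd y1) / (snd y2 - snd y1)"
      using k by (simp add: field_simps)
    then show "c \<in> (\<lambda>(y1,y2). (fst y1 * snd y2 - fst y2 * snd y1) / (snd y2 - snd y1)) ` (K \<times> K)"
      using h(2,3) by force
  qed
  then show ?thesis using assms(1) finite_subset by blast
qed

lemma two_lines_unique:
  assumes "snd z > 0" "snd w > 0" "snd y1 < 0" "snd y2 < 0"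
    and "proj z y1 = v1" "proj w y1 = v1" "proj z y2 = v2" "proj w y2 = v2" "v1 \<noteq> v2"
  shows "z = w"
proof -
  have e1: "snd y1 * fst z + (v1 - fst y1) * snd z - snd y1 * v1 = 0" using line_eq assms by blast
  have e2: "snd y2 * fst z + (v2 - fst y2) * snd z - snd y2 * v2 = 0" using line_eq assms by blast
  have f1: "snd y1 * fst w + (v1 - fst y1) * snd w - snd y1 * v1 = 0" using line_eq assms by blast
  have f2: "snd y2 * fst w + (v2 - fst y2) * snd w - snd y2 * v2 = 0" using line_eq assms by blast
  define D where "D = snd y1 * (v2 - fst y2) - snd y2 * (v1 - fst y1)"
  have "D * snd z = snd y1 * snd y2 * (v2 - v1)"
  proof -
    have "snd y1 * (snd y2 * fst z + (v2 - fst y2) * snd z - snd y2 * v2) - snd y2 * (snd y1 * fst z + (v1 - fst y1) * snd z - snd y1 * v1) = 0"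
      using e1 e2 by simp
    then show ?thesis unfolding D_def by (simp add: algebra_simps)
  qed
  then have Dn: "D \<noteq> 0" using assms by auto
  have a: "D * (snd z - snd w) = 0"
  proof -
    have "snd y1 * ((snd y2 * fst z + (v2 - fst y2) * snd z - snd y2 * v2) - (snd y2 * fst w + (v2 - fst y2) * snd w - snd y2 * v2))
       - snd y2 * ((snd y1 * fst z + (v1 - fst y1) * snd z - snd y1 * v1) - (snd y1 * fst w + (v1 - fst y1) * snd w - snd y1 * v1)) = 0"
      using e1 e2 f1 f2 by simp
    then show ?thesis unfolding D_def by (simp add: algebra_simps)
  qed
  have b: "D * (fst z - fst w) = 0"
  proof -
    have "(v2 - fst y2) * ((snd y1 * fst z + (v1 - fst y1) * snd z - snd y1 * v1) - (snd y1 * fst w + (v1 - fst y1) * snd w - snd y1 * v1))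
       - (v1 - fst y1) * ((snd y2 * fst z + (v2 - fst y2) * snd z - snd y2 * v2) - (snd y2 * fst w + (v2 - fst y2) * snd w - snd y2 * v2)) = 0"
      using e1 e2 f1 f2 by simp
    then show ?thesis unfolding D_def by (simp add: algebra_simps)
  qed
  show ?thesis using a b Dn by (simp add: prod_eq_iff)
qed

definition det3 :: "real \<Rightarrow> real \<Rightarrow> real \<Rightarrow> real \<Rightarrow> real \<Rightarrow> real \<Rightarrow> real \<Rightarrow> real \<Rightarrow> real \<Rightarrow> real" where
  "det3 a1 a2 a3 b1 b2 b3 c1 c2 c3 = a1*(b2*c3 - b3*c2) - a2*(b1*c3 - b3*c1) + a3*(b1*c2 - b2*c1)"

lemma det3_zero:
  assumes "a1*x + a2*y + a3 = 0" "b1*x + b2*y + b3 = 0" "c1*x + c2*y + c3 = 0"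
  shows "det3 a1 a2 a3 b1 b2 b3 c1 c2 c3 = 0"
proof -
  have h: "a3 = -(a1*x + a2*y)" "b3 = -(b1*x + b2*y)" "c3 = -(c1*x + c2*y)" using assms by linarith+
  show ?thesis unfolding det3_def h by (simp add: algebra_simps)
qed

lemma det3_affine:
  "det3 (p1 + t*q1) (p2 + t*q2) (p3 + t*q3) (u1 + t*w1) (u2 + t*w2) (u3 + t*w3) c1 c2 c3 =
   det3 q1 q2 q3 w1 w2 w3 c1 c2 c3 * t^2 + (det3 q1 q2 q3 u1 u2 u3 c1 c2 c3 + det3 p1 p2 p3 w1 w2 w3 c1 c2 c3) * t
   + det3 p1 p2 p3 u1 u2 u3 c1 c2 c3"
  unfolding det3_def by (simp add: algebra_simps power2_eq_square)

definition Dfun :: "real \<times> real \<Rightarrow> real \<times> real \<Rightarrow> real \<times> real \<Rightarrow> real \<times> real \<Rightarrow> real \<times> real \<Rightarrow> real \<Rightarrow> real \<Rightarrow> real \<Rightarrow> real" where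
  "Dfun y0 y1 y2 s1 s2 q t h =
     det3 (snd y1 * (h - snd s1)) ((h * fst s1 - t * snd s1) - fst y1 * (h - snd s1)) (- snd y1 * (h * fst s1 - t * snd s1))
          (snd y2 * (h - snd s2)) ((h * fst s2 - t * snd s2) - fst y2 * (h - snd s2)) (- snd y2 * (h * fst s2 - t * snd s2))
          (snd y0) (q - fst y0) (- snd y0 * q)"

lemma Dfun_quad_t: "\<exists>A B C. \<forall>t. Dfun y0 y1 y2 s1 s2 q t h = A * t^2 + B * t + C"
proof -
  have "\<And>t. Dfun y0 y1 y2 s1 s2 q t h =
     det3 (snd y1 * (h - snd s1) + t * 0) ((h * fst s1 - fst y1 * (h - snd s1)) + t * (- snd s1)) (- snd y1 * h * fst s1 + t * (snd y1 * snd s1))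
          (snd y2 * (h - snd s2) + t * 0) ((h * fst s2 - fst y2 * (h - snd s2)) + t * (- snd s2)) (- snd y2 * h * fst s2 + t * (snd y2 * snd s2))
          (snd y0) (q - fst y0) (- snd y0 * q)"
    unfolding Dfun_def by (simp add: algebra_simps)
  then show ?thesis unfolding det3_affine by blast
qed

lemma Dfun_quad_h: "\<exists>A B C. \<forall>h. Dfun y0 y1 y2 s1 s2 q t h = A * h^2 + B * h + C"
proof -
  have "\<And>h. Dfun y0 y1 y2 s1 s2 q t h =
     det3 (- snd y1 * snd s1 + h * snd y1) ((- t * snd s1 + fst y1 * snd s1) + h * (fst s1 - fst y1)) (snd y1 * t * snd s1 + h * (- snd y1 * fst s1))
          (- snd y2 * snd s2 + h * snd y2) ((- t * snd s2 + fst y2 * snd s2) + h * (fst s2 - fst y2)) (snd y2 * t * snd s2 + h * (- snd y2 * fst s2))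
          (snd y0) (q - fst y0) (- snd y0 * q)"
    unfolding Dfun_def by (simp add: algebra_simps)
  then show ?thesis unfolding det3_affine by blast
qed

lemma Dfun_h0:
  "Dfun y0 y1 y2 s1 s2 q t 0 = snd s1 * snd s2 * snd y0 * (t - q) * (snd y1 * (t - fst y2) - snd y2 * (t - fst y1))"
  unfolding Dfun_def det3_def by (simp add: algebra_simps)

lemma quad_roots_finite:
  fixes f :: "real \<Rightarrow> real"
  assumes "\<forall>x. f x = A * x^2 + B * x + C" "f x0 \<noteq> 0"
  shows "finite {x. f x = 0}"
proof -
  have pf: "\<And>x. f x = poly [:C, B, A:] x" using assms(1) by (simp add: algebra_simps power2_eq_square)
  have "[:C, B, A:] \<noteq> 0" using assms(2) pf by auto
  then have "finite {x. poly [:C, B, A:] x = 0}" by (rule poly_roots_finite)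
  then show ?thesis using pf by simp
qed

lemma Dfun_h0_nonzero:
  assumes "snd s1 < 0" "snd s2 < 0" "snd y0 < 0" "snd y1 < 0" "snd y2 < 0" "y1 \<noteq> y2"
  shows "\<exists>t. Dfun y0 y1 y2 s1 s2 q t 0 \<noteq> 0"
proof -
  have "{t. snd y1 * (t - fst y2) - snd y2 * (t - fst y1) = 0} \<subseteq> {(snd y1 * fst y2 - snd y2 * fst y1) / (snd y1 - snd y2)}"
  proof
    fix t assume "t \<in> {t. snd y1 * (t - fst y2) - snd y2 * (t - fst y1) = 0}"
    then have ht: "snd y1 * (t - fst y2) - snd y2 * (t - fst y1) = 0" by simp
    show "t \<in> {(snd y1 * fst y2 - snd y2 * fst y1) / (snd y1 - snd y2)}"
    proof (cases "snd y1 = snd y2")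
      case True
      then have "fst y1 \<noteq> fst y2" using assms(6) by (simp add: prod_eq_iff)
      then show ?thesis using True ht assms by (simp add: algebra_simps)
    next
      case False
      then show ?thesis using ht by (simp add: field_simps)
    qed
  qed
  then have "finite (insert q {t. snd y1 * (t - fst y2) - snd y2 * (t - fst y1) = 0})"
    using finite_subset by auto
  then obtain t where t: "t \<notin> insert q {t. snd y1 * (t - fst y2) - snd y2 * (t - fst y1) = 0}"
    using ex_new_if_finite[OF infinite_UNIV_char_0] by blast
  then show ?thesis using assms unfolding Dfun_h0 by auto
qed

lemma Dfun_concurrent:
  assumes z: "snd z > 0" and z': "snd z' > 0"
    and l: "snd y0 < 0" "snd y1 < 0" "snd y2 < 0" "snd s1 < 0" "snd s2 < 0"
    and e: "proj z' y1 = proj z s1" "proj z' y2 = proj z s2" "proj z' y0 = q"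
  shows "Dfun y0 y1 y2 s1 s2 q (fst z) (snd z) = 0"
proof -
  define d1 where "d1 = snd z - snd s1"
  define d2 where "d2 = snd z - snd s2"
  have d: "d1 \<noteq> 0" "d2 \<noteq> 0" using z l unfolding d1_def d2_def by auto
  define N1 where "N1 = snd z * fst s1 - fst z * snd s1"
  define N2 where "N2 = snd z * fst s2 - fst z * snd s2"
  have p1: "proj z s1 = N1 / d1" unfolding proj_def N1_def d1_def ..
  have p2: "proj z s2 = N2 / d2" unfolding proj_def N2_def d2_def ..
  have E1: "snd y1 * fst z' + (N1/d1 - fst y1) * snd z' - snd y1 * (N1/d1) = 0"
    using line_eq[OF z' l(2) e(1)] p1 by simp
  have E2: "snd y2 * fst z' + (N2/d2 - fst y2) * snd z' - snd y2 * (N2/d2) = 0"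
    using line_eq[OF z' l(3) e(2)] p2 by simp
  have E0: "snd y0 * fst z' + (q - fst y0) * snd z' - snd y0 * q = 0"
    using line_eq[OF z' l(1) e(3)] by simp
  have F1: "(snd y1 * d1) * fst z' + (N1 - fst y1 * d1) * snd z' + (- snd y1 * N1) = 0"
  proof -
    have "d1 * (snd y1 * fst z' + (N1/d1 - fst y1) * snd z' - snd y1 * (N1/d1)) = 0" using E1 by simp
    then show ?thesis using d by (simp add: algebra_simps)
  qed
  have F2: "(snd y2 * d2) * fst z' + (N2 - fst y2 * d2) * snd z' + (- snd y2 * N2) = 0"
  proof -
    have "d2 * (snd y2 * fst z' + (N2/d2 - fst y2) * snd z' - snd y2 * (N2/d2)) = 0" using E2 by simp
    then show ?thesis using d by (simp add: algebra_simps)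
  qed
  have F0: "snd y0 * fst z' + (q - fst y0) * snd z' + (- snd y0 * q) = 0" using E0 by simp
  have "det3 (snd y1 * d1) (N1 - fst y1 * d1) (- snd y1 * N1) (snd y2 * d2) (N2 - fst y2 * d2) (- snd y2 * N2)
     (snd y0) (q - fst y0) (- snd y0 * q) = 0"
    by (rule det3_zero[OF F1 F2 F0])
  then show ?thesis unfolding Dfun_def d1_def d2_def N1_def N2_def .
qed


unbundle cardinal_syntax

definition small :: "'a set \<Rightarrow> bool" where
  "small A \<longleftrightarrow> |A| <o |UNIV :: real set|"

lemma small_finite: "finite A \<Longrightarrow> small A"
  unfolding small_def
  by (rule finite_ordLess_infinite) (auto simp: card_of_Well_order card_of_well_order_on Field_card_of infinite_UNIV_char_0)

lemma small_subset: "B \<subseteq> A \<Longrightarrow> small A \<Longrightarrow> small B"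
  unfolding small_def using card_of_mono1 ordLeq_ordLess_trans by blast

lemma small_Un: "small A \<Longrightarrow> small B \<Longrightarrow> small (A \<union> B)"
  unfolding small_def by (rule card_of_Un_ordLess_infinite) (auto simp: infinite_UNIV_char_0)

lemma small_image: "small A \<Longrightarrow> small (f ` A)"
  unfolding small_def using card_of_image ordLeq_ordLess_trans by blast

lemma small_UN_finite_index:
  assumes "finite I" "\<forall>i\<in>I. small (F i)"
  shows "small (\<Union>i\<in>I. F i)"
  using assms
proof (induction I rule: finite_induct)
  case empty
  then show ?case by (simp add: small_finite)
next
  case (insert x I)
  then show ?case by (simp add: small_Un)
qed

lemma small_UN_finite_sets:
  assumes I: "small I" and F: "\<forall>i\<in>I. finite (F i)"
  shows "small (\<Union>i\<in>I. F i)"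
proof (cases "finite I")
  case True
  then show ?thesis using F by (simp add: small_finite)
next
  case False
  have "\<forall>i\<in>I. |F i| \<le>o |I|"
  proof
    fix i assume "i \<in> I"
    then have "finite (F i)" using F by blast
    then have "|F i| <o |I|"
      using False by (intro finite_ordLess_infinite) (auto simp: card_of_Well_order card_of_well_order_on Field_card_of)
    then show "|F i| \<le>o |I|" by (rule ordLess_imp_ordLeq)
  qed
  then have "|\<Union>i\<in>I. F i| \<le>o |I|"
    using card_of_UNION_ordLeq_infinite[OF False] card_of_refl ordIso_imp_ordLeq by blast
  then show ?thesis using I unfolding small_def using ordLeq_ordLess_trans by blast
qed

lemma small_Times_finite:
  assumes "finite A" "small B"
  shows "small (A \<times> B)"
proof -
  have "A \<times> B = (\<Union>a\<in>A. Pair a ` B)" by auto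
  then show ?thesis using assms by (simp add: small_UN_finite_index small_image)
qed

lemma small_Times_same:
  assumes "small A"
  shows "small (A \<times> A)"
proof (cases "finite A")
  case True
  then show ?thesis by (simp add: small_finite)
next
  case False
  then have "|A \<times> A| =o |A|" by (rule card_of_Times_same_infinite)
  then show ?thesis using assms unfolding small_def using ordIso_ordLess_trans by blast
qed

lemma small_not_UNIV:
  assumes "small (A :: real set)"
  shows "\<exists>x. x \<notin> A"
proof (rule ccontr)
  assume "\<not> (\<exists>x. x \<notin> A)"
  then have "A = UNIV" by auto
  then show False using assms unfolding small_def using ordLess_irreflexive by auto
qed

lemma nat_ordLess_real: "|UNIV :: nat set| <o |UNIV :: real set|"
proof -
  have "\<not> |UNIV :: real set| \<le>o |UNIV :: nat set|"
    using uncountable_UNIV_real countable_card_of_nat by blast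
  then show ?thesis using not_ordLeq_iff_ordLess[OF card_of_Well_order card_of_Well_order] by blast
qed

lemma small_countable: "countable A \<Longrightarrow> small A"
  unfolding small_def using countable_card_of_nat nat_ordLess_real ordLeq_ordLess_trans by blast


definition seesK :: "(real \<times> real) set \<Rightarrow> real set \<Rightarrow> bool" where
  "seesK K D \<longleftrightarrow> (\<exists>z. snd z > 0 \<and> (\<forall>y\<in>K. proj z y \<in> D))"

definition Zset :: "(real \<times> real) set \<Rightarrow> real set \<Rightarrow> (real \<times> real) set" where
  "Zset K X = {z. snd z > 0 \<and> (\<exists>y1\<in>K. \<exists>y2\<in>K. proj z y1 \<in> X \<and> proj z y2 \<in> X \<and> proj z y1 \<noteq> proj z y2)}"

lemma Zset_small:
  assumes K: "finite K" "K \<subseteq> lower_half" and X: "small X"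
  shows "small (Zset K X)"
proof -
  define g where "g y1 y2 = (\<lambda>(v1,v2). SOME z. snd z > 0 \<and> proj z y1 = v1 \<and> proj z y2 = v2)" for y1 y2
  have "Zset K X \<subseteq> (\<Union>y1\<in>K. \<Union>y2\<in>K. g y1 y2 ` (X \<times> X))"
  proof
    fix z assume "z \<in> Zset K X"
    then obtain y1 y2 where h: "snd z > 0" "y1 \<in> K" "y2 \<in> K" "proj z y1 \<in> X" "proj z y2 \<in> X" "proj z y1 \<noteq> proj z y2"
      unfolding Zset_def by blast
    have l: "snd y1 < 0" "snd y2 < 0" using h K unfolding lower_half_def by auto
    define w where "w = g y1 y2 (proj z y1, proj z y2)"
    have ex: "\<exists>z'. snd z' > 0 \<and> proj z' y1 = proj z y1 \<and> proj z' y2 = proj z y2" using h by blast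
    have "w = (SOME z'. snd z' > 0 \<and> proj z' y1 = proj z y1 \<and> proj z' y2 = proj z y2)"
      unfolding w_def g_def by simp
    then have w: "snd w > 0 \<and> proj w y1 = proj z y1 \<and> proj w y2 = proj z y2"
      using someI_ex[OF ex] by simp
    have "z = w" using two_lines_unique[OF h(1) _ l, of w "proj z y1" "proj z y2"] w h(6) by auto
    then show "z \<in> (\<Union>y1\<in>K. \<Union>y2\<in>K. g y1 y2 ` (X \<times> X))" unfolding w_def using h by blast
  qed
  moreover have "small (\<Union>y1\<in>K. \<Union>y2\<in>K. g y1 y2 ` (X \<times> X))"
    using K X by (intro small_UN_finite_index ballI small_image small_Times_same) auto
  ultimately show ?thesis using small_subset by blast
qed

lemma choose_z:
  assumes Kf: "finite K" and Kl: "K \<subseteq> lower_half" and K3: "card K \<ge> 3"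
    and Sf: "finite S" and Sl: "S \<subseteq> lower_half" and SK: "card S < card K"
    and Xs: "small X" and XC: "X \<inter> collv K = {}" and XK: "\<not> seesK K X"
  shows "\<exists>z. snd z > 0 \<and> proj z ` S \<inter> collv K = {} \<and> \<not> seesK K (X \<union> proj z ` S)"
proof -
  define W where "W = collv K \<union> (\<lambda>(y,z'). proj z' y) ` (K \<times> Zset K X)"
  have Ws: "small W" unfolding W_def
    using small_Un[OF small_finite[OF collv_finite[OF Kf Kl]] small_image[OF small_Times_finite[OF Kf Zset_small[OF Kf Kl Xs]]]] .
  define Dat where "Dat = {d \<in> K \<times> K \<times> K \<times> S \<times> S \<times> X. fst (snd d) \<noteq> fst (snd (snd d))}"
  have Dats: "small Dat"
  proof -
    have "small (K \<times> K \<times> K \<times> S \<times> S \<times> X)"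
      using small_Times_finite[OF Kf small_Times_finite[OF Kf small_Times_finite[OF Kf small_Times_finite[OF Sf small_Times_finite[OF Sf Xs]]]]] .
    then show ?thesis unfolding Dat_def by (rule small_subset[rotated]) auto
  qed
  define Df where "Df d t h = (case d of (y0,y1,y2,s1,s2,q) \<Rightarrow> Dfun y0 y1 y2 s1 s2 q t h)" for d t h
  have lowK: "snd y < 0" if "y \<in> K" for y using that Kl unfolding lower_half_def by auto
  have lowS: "snd y < 0" if "y \<in> S" for y using that Sl unfolding lower_half_def by auto
  have ex0: "\<exists>t. Df d t 0 \<noteq> 0" if "d \<in> Dat" for d
  proof -
    obtain y0 y1 y2 s1 s2 q where d: "d = (y0,y1,y2,s1,s2,q)" by (cases d) auto
    have "y0 \<in> K" "y1 \<in> K" "y2 \<in> K" "s1 \<in> S" "s2 \<in> S" "y1 \<noteq> y2" using that unfolding Dat_def d by auto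
    then have "\<exists>t. Dfun y0 y1 y2 s1 s2 q t 0 \<noteq> 0"
      by (intro Dfun_h0_nonzero lowK lowS)
    then show ?thesis unfolding Df_def d by simp
  qed
  define t0 where "t0 d = (SOME t. Df d t 0 \<noteq> 0)" for d
  have t0: "Df d (t0 d) 0 \<noteq> 0" if "d \<in> Dat" for d
    unfolding t0_def using ex0[OF that] by (rule someI_ex)
  have quad_h: "\<exists>A B C. \<forall>h. Df d t h = A * h^2 + B * h + C" for d t
  proof -
    obtain y0 y1 y2 s1 s2 q where d: "d = (y0,y1,y2,s1,s2,q)" by (cases d) auto
    show ?thesis unfolding Df_def d using Dfun_quad_h[of y0 y1 y2 s1 s2 q t] by simp
  qed
  have quad_t: "\<exists>A B C. \<forall>t. Df d t h = A * t^2 + B * t + C" for d h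
  proof -
    obtain y0 y1 y2 s1 s2 q where d: "d = (y0,y1,y2,s1,s2,q)" by (cases d) auto
    show ?thesis unfolding Df_def d using Dfun_quad_t[of y0 y1 y2 s1 s2 q h] by simp
  qed
  define BH where "BH = (\<Union>d\<in>Dat. {h. Df d (t0 d) h = 0})"
  have "small BH" unfolding BH_def
  proof (intro small_UN_finite_sets Dats ballI)
    fix d assume d: "d \<in> Dat"
    obtain A B C where "\<forall>h. Df d (t0 d) h = A * h^2 + B * h + C" using quad_h by blast
    then show "finite {h. Df d (t0 d) h = 0}" using quad_roots_finite t0[OF d] by blast
  qed
  then obtain x where "x \<notin> ln ` BH" using small_not_UNIV small_image by blast
  define h where "h = exp x"
  have hpos: "h > 0" unfolding h_def by simp
  have hBH: "h \<notin> BH" using \<open>x \<notin> ln ` BH\<close> unfolding h_def by (metis image_eqI ln_exp)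
  have hgood: "Df d (t0 d) h \<noteq> 0" if "d \<in> Dat" for d using hBH that unfolding BH_def by blast
  define tsol where "tsol s w = (snd s * w - (w - fst s) * h) / snd s" for s :: "real \<times> real" and w
  define BT where "BT = (\<Union>s\<in>S. tsol s ` W) \<union> (\<Union>d\<in>Dat. {t. Df d t h = 0})"
  have s1: "small (\<Union>s\<in>S. tsol s ` W)"
    by (rule small_UN_finite_index[OF Sf]) (auto intro: small_image Ws)
  have s2: "small (\<Union>d\<in>Dat. {t. Df d t h = 0})"
  proof (rule small_UN_finite_sets[OF Dats], intro ballI)
    fix d assume d: "d \<in> Dat"
    obtain A B C where "\<forall>t. Df d t h = A * t^2 + B * t + C" using quad_t by blast
    then show "finite {t. Df d t h = 0}" by (rule quad_roots_finite[where f="\<lambda>t. Df d t h", OF _ hgood[OF d]])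
  qed
  have "small BT" unfolding BT_def using small_Un[OF s1 s2] .
  then obtain t where tBT: "t \<notin> BT" using small_not_UNIV by blast
  define z where "z = (t, h)"
  have zpos: "snd z > 0" unfolding z_def using hpos by simp
  have L: "proj z s \<noteq> w" if "s \<in> S" "w \<in> W" for s w
  proof
    assume e: "proj z s = w"
    have "snd s * fst z + (w - fst s) * snd z - snd s * w = 0" using line_eq[OF zpos lowS[OF that(1)] e] .
    then have "t = tsol s w" unfolding tsol_def z_def using lowS[OF that(1)] by (simp add: field_simps)
    then show False using tBT that unfolding BT_def by blast
  qed
  have C: "Df d t h \<noteq> 0" if "d \<in> Dat" for d using tBT that unfolding BT_def by blast
  define P where "P = proj z ` S"
  have PC: "P \<inter> collv K = {}" unfolding P_def using L W_def by blast
  have notsee: "\<not> seesK K (X \<union> P)"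
  proof
    assume "seesK K (X \<union> P)"
    then obtain z' where z': "snd z' > 0" "\<forall>y\<in>K. proj z' y \<in> X \<union> P" unfolding seesK_def by blast
    have inj: "proj z' y1 \<noteq> proj z' y2" if "y1 \<in> K" "y2 \<in> K" "y1 \<noteq> y2" for y1 y2
    proof
      assume e: "proj z' y1 = proj z' y2"
      then have "proj z' y1 \<in> collv K" unfolding collv_def using that z'(1)
        by (intro CollectI exI[of _ z'] exI[of _ y1] exI[of _ y2]) simp
      moreover have "proj z' y1 \<in> X \<union> P" using z'(2) that by blast
      ultimately show False using XC PC by blast
    qed
    define KX where "KX = {y\<in>K. proj z' y \<in> X}"
    show False
    proof (cases "\<exists>y1\<in>KX. \<exists>y2\<in>KX. y1 \<noteq> y2")
      case True
      then obtain y1 y2 where y: "y1 \<in> KX" "y2 \<in> KX" "y1 \<noteq> y2" by blast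
      have zZ: "z' \<in> Zset K X" unfolding Zset_def using y inj z'(1) unfolding KX_def by blast
      obtain y where y: "y \<in> K" "proj z' y \<notin> X" using XK z'(1) unfolding seesK_def by blast
      then have "proj z' y \<in> P" using z'(2) by blast
      then obtain s where s: "s \<in> S" "proj z' y = proj z s" unfolding P_def by blast
      have "proj z' y \<in> W" unfolding W_def using y zZ by force
      then show False using L[OF s(1)] s(2) by metis
    next
      case False
      have injo: "inj_on (\<lambda>y. proj z' y) (K - KX)" unfolding inj_on_def using inj by blast
      have sub: "(\<lambda>y. proj z' y) ` (K - KX) \<subseteq> P" using z'(2) unfolding KX_def by blast
      have "card (K - KX) \<le> card P"
        using card_inj_on_le[OF injo sub] P_def Sf by simp
      also have "card P \<le> card S" unfolding P_def using Sf by (rule card_image_le)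
      finally have c1: "card (K - KX) < card K" using SK by simp
      have "KX \<noteq> {}"
      proof
        assume "KX = {}"
        then show False using c1 by simp
      qed
      then obtain y0 where y0: "y0 \<in> KX" by blast
      have KX1: "KX \<subseteq> {y0}" using False y0 by blast
      have "card (K - {y0}) \<ge> 2" using K3 Kf y0 unfolding KX_def by (simp add: card_Diff_singleton)
      then have "\<not> card (K - {y0}) \<le> Suc 0" by simp
      then obtain y1 y2 where y12: "y1 \<in> K - {y0}" "y2 \<in> K - {y0}" "y1 \<noteq> y2"
        using card_le_Suc0_iff_eq[of "K - {y0}"] Kf by blast
      have "proj z' y1 \<in> P" "proj z' y2 \<in> P" using z'(2) y12 KX1 unfolding KX_def by blast+
      then obtain s1 s2 where s: "s1 \<in> S" "proj z' y1 = proj z s1" "s2 \<in> S" "proj z' y2 = proj z s2"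
        unfolding P_def by blast
      define q where "q = proj z' y0"
      have "q \<in> X" "y0 \<in> K" using y0 unfolding KX_def q_def by auto
      then have dD: "(y0,y1,y2,s1,s2,q) \<in> Dat" unfolding Dat_def using y12 s by auto
      have "Dfun y0 y1 y2 s1 s2 q (fst z) (snd z) = 0"
        using Dfun_concurrent[OF zpos z'(1) lowK[OF \<open>y0 \<in> K\<close>] _ _ lowS[OF s(1)] lowS[OF s(3)] s(2) s(4) q_def[symmetric]]
          lowK y12 by blast
      then show False using C[OF dD] unfolding Df_def z_def by simp
    qed
  qed
  show ?thesis using zpos PC notsee unfolding P_def by blast
qed


theorem proposition2p3:
  fixes k :: nat
    and K :: "(real \<times> real) set"
    and r :: "'o rel"
    and a :: "'o \<Rightarrow> (real \<times> real) set"
  assumes k2: "k \<ge> 2"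
    and K_sub: "K \<subseteq> lower_half" and K_fin: "finite K" and K_card: "card K = k + 1"
    and r_initial: "card_order r"
    and r_card: "(card_of (UNIV :: 'o set), card_of (UNIV :: real set)) \<in> ordIso"
    and a_bij: "bij_betw a UNIV {S. S \<subseteq> lower_half \<and> finite S \<and> card S = k}"
  shows "\<exists>A B :: 'o \<Rightarrow> (real \<times> real) set.
     (\<forall>l1 l2. (l1, l2) \<in> r \<and> l1 \<noteq> l2 \<longrightarrow> A l1 \<subseteq> A l2 \<and> B l1 \<subseteq> B l2) \<and>
     (\<forall>l. A l \<subseteq> x_axis \<and> B l \<subseteq> x_axis
        \<and> A l \<inter> B l = {}
        \<and> ((card_of (A l), card_of (underS r l)) \<in> ordLeq
            \<or> (card_of (A l), card_of (UNIV :: nat set)) \<in> ordLeq)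
        \<and> ((card_of (B l), card_of (underS r l)) \<in> ordLeq
            \<or> (card_of (B l), card_of (UNIV :: nat set)) \<in> ordLeq)
        \<and> (card_of (A l), card_of (UNIV :: real set)) \<in> ordLess
        \<and> (card_of (B l), card_of (UNIV :: real set)) \<in> ordLess
        \<and> (\<exists>z\<in>upper_half. \<forall>y\<in>a l. sees_via z y (A l))
        \<and> \<not> (\<exists>z\<in>upper_half. \<forall>y\<in>K. sees_via z y (A l)))"
proof -
  have FR: "Field r = UNIV" and CO: "Card_order r"
    using card_order_on_Card_order[OF r_initial] by auto
  have WO: "wo_rel r" unfolding wo_rel_def using CO unfolding card_order_on_def by simp
  have refl: "(x, x) \<in> r" for x using wo_rel.REFL[OF WO] FR unfolding refl_on_def by auto
  have trans: "(x, y) \<in> r \<Longrightarrow> (y, z) \<in> r \<Longrightarrow> (x, z) \<in> r" for x y z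
    using wo_rel.TRANS[OF WO] unfolding trans_def by blast
  have total: "(x, y) \<in> r \<or> (y, x) \<in> r" for x y
    using wo_rel.TOTALS[OF WO] FR by auto
  have a_in: "a l \<subseteq> lower_half \<and> finite (a l) \<and> card (a l) = k" for l
    using a_bij unfolding bij_betw_def by auto
  have small_underS: "small (underS r l)" for l
  proof -
    have "|underS r l| <o r" using card_of_underS[OF CO] FR by simp
    moreover have "r =o |UNIV :: 'o set|" using card_of_Field_ordIso[OF CO] FR ordIso_symmetric by simp
    ultimately have "|underS r l| <o |UNIV :: 'o set|" using ordLess_ordIso_trans by blast
    then show ?thesis unfolding small_def using r_card ordLess_ordIso_trans by blast
  qed
  have Kc3: "card K \<ge> 3" using K_card k2 by simp
  define zch where "zch X S = (SOME z. snd z > 0 \<and> proj z ` S \<inter> collv K = {} \<and> \<not> seesK K (X \<union> proj z ` S))"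
    for X :: "real set" and S
  define H where "H f \<mu> = zch (\<Union>\<nu>\<in>underS r \<mu>. proj (f \<nu>) ` a \<nu>) (a \<mu>)" for f \<mu>
  define zf where "zf = wo_rel.worec r H"
  have adm: "wo_rel.adm_wo r H"
    unfolding wo_rel.adm_wo_def[OF WO] H_def by (metis (no_types, lifting) SUP_cong)
  have zfix: "zf \<mu> = H zf \<mu>" for \<mu>
    unfolding zf_def using wo_rel.worec_fixpoint[OF WO adm] by metis
  define P where "P \<nu> = proj (zf \<nu>) ` a \<nu>" for \<nu>
  define Xlt where "Xlt \<mu> = (\<Union>\<nu>\<in>underS r \<mu>. P \<nu>)" for \<mu>
  define Xle where "Xle \<mu> = (\<Union>\<nu>\<in>under r \<mu>. P \<nu>)" for \<mu>
  have Pfin: "finite (P \<nu>)" for \<nu> unfolding P_def using a_in by simp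
  have under_eq: "under r \<mu> = insert \<mu> (underS r \<mu>)" for \<mu>
    unfolding under_def underS_def using refl by auto
  have Xle_eq: "Xle \<mu> = Xlt \<mu> \<union> P \<mu>" for \<mu>
    unfolding Xle_def Xlt_def under_eq by auto
  have Xlt_small: "small (Xlt \<mu>)" for \<mu>
    unfolding Xlt_def using small_UN_finite_sets[OF small_underS] Pfin by blast
  have Xle_small: "small (Xle \<mu>)" for \<mu>
    unfolding Xle_eq using Xlt_small small_Un small_finite Pfin by blast
  have Xle_mono: "(\<nu>1, \<nu>2) \<in> r \<Longrightarrow> Xle \<nu>1 \<subseteq> Xle \<nu>2" for \<nu>1 \<nu>2
    unfolding Xle_def under_def using trans by blast
  have zf_eq: "zf \<mu> = zch (Xlt \<mu>) (a \<mu>)" for \<mu>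
    using zfix[of \<mu>] unfolding H_def Xlt_def P_def by simp
  define Inv where "Inv \<mu> \<longleftrightarrow> snd (zf \<mu>) > 0 \<and> P \<mu> \<inter> collv K = {} \<and> \<not> seesK K (Xle \<mu>)" for \<mu>
  have Inv: "Inv \<mu>" for \<mu>
  proof (rule wo_rel.well_order_induct[OF WO])
    fix \<mu>
    assume IH0: "\<forall>\<nu>. \<nu> \<noteq> \<mu> \<and> (\<nu>, \<mu>) \<in> r \<longrightarrow> Inv \<nu>"
    then have IH: "Inv \<nu>" if "\<nu> \<in> underS r \<mu>" for \<nu> using that unfolding underS_def by blast
    have XC: "Xlt \<mu> \<inter> collv K = {}" unfolding Xlt_def using IH unfolding Inv_def by blast
    have XK: "\<not> seesK K (Xlt \<mu>)"
    proof
      assume "seesK K (Xlt \<mu>)"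
      then obtain z' where z': "snd z' > 0" "\<forall>y\<in>K. proj z' y \<in> Xlt \<mu>" unfolding seesK_def by blast
      define F where "F = (\<lambda>y. proj z' y) ` K"
      have Ff: "finite F" unfolding F_def using K_fin by simp
      have Fne: "F \<noteq> {}" unfolding F_def using Kc3 by auto
      have FU: "F \<subseteq> \<Union>(Xle ` underS r \<mu>)"
      proof
        fix x assume "x \<in> F"
        then have "x \<in> Xlt \<mu>" unfolding F_def using z'(2) by blast
        then obtain \<nu> where "\<nu> \<in> underS r \<mu>" "x \<in> P \<nu>" unfolding Xlt_def by blast
        then show "x \<in> \<Union>(Xle ` underS r \<mu>)" unfolding Xle_eq by blast
      qed
      have ne: "Xle ` underS r \<mu> \<noteq> {}" using FU Fne by auto
      have ch: "subset.chain UNIV (Xle ` underS r \<mu>)"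
        unfolding subset.chain_def using total Xle_mono by blast
      obtain B where B: "B \<in> Xle ` underS r \<mu>" "F \<subseteq> B"
        using finite_subset_Union_chain[OF Ff FU ne ch] by blast
      then obtain \<nu> where \<nu>: "\<nu> \<in> underS r \<mu>" "F \<subseteq> Xle \<nu>" by blast
      have "seesK K (Xle \<nu>)" unfolding seesK_def using z'(1) \<nu>(2) unfolding F_def by blast
      then show False using IH[OF \<nu>(1)] unfolding Inv_def by blast
    qed
    have "\<exists>z. snd z > 0 \<and> proj z ` a \<mu> \<inter> collv K = {} \<and> \<not> seesK K (Xlt \<mu> \<union> proj z ` a \<mu>)"
      using choose_z[OF K_fin K_sub Kc3, of "a \<mu>" "Xlt \<mu>"] a_in[of \<mu>] K_card Xlt_small XC XK by simp
    then have "snd (zf \<mu>) > 0 \<and> proj (zf \<mu>) ` a \<mu> \<inter> collv K = {} \<and> \<not> seesK K (Xlt \<mu> \<union> proj (zf \<mu>) ` a \<mu>)"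
      unfolding zf_eq zch_def by (rule someI_ex)
    then show "Inv \<mu>" unfolding Inv_def Xle_eq P_def by simp
  qed
  define A where "A l = (\<lambda>x. (x, 0::real)) ` Xle l" for l
  define B where "B l = ({} :: (real \<times> real) set)" for l :: 'o
  have cardA: "|A l| \<le>o |underS r l| \<or> |A l| \<le>o |UNIV :: nat set|" for l
  proof (cases "finite (underS r l)")
    case True
    then have "finite (Xle l)" unfolding Xle_def under_eq using Pfin by simp
    then have "countable (A l)" unfolding A_def by (simp add: countable_finite)
    then show ?thesis using countable_card_of_nat by blast
  next
    case False
    have "\<forall>\<nu>\<in>underS r l. |P \<nu>| \<le>o |underS r l|"
    proof
      fix \<nu> assume "\<nu> \<in> underS r l"
      show "|P \<nu>| \<le>o |underS r l|"
        using False Pfin[of \<nu>]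
        by (intro ordLess_imp_ordLeq finite_ordLess_infinite) (auto simp: card_of_Well_order card_of_well_order_on Field_card_of)
    qed
    then have "|Xlt l| \<le>o |underS r l|" unfolding Xlt_def
      using card_of_UNION_ordLeq_infinite[OF False] card_of_refl ordIso_imp_ordLeq by blast
    moreover have "|P l| \<le>o |underS r l|"
      using False Pfin[of l]
      by (intro ordLess_imp_ordLeq finite_ordLess_infinite) (auto simp: card_of_Well_order card_of_well_order_on Field_card_of)
    ultimately have "|Xle l| \<le>o |underS r l|" unfolding Xle_eq
      using card_of_Un_ordLeq_infinite_Field[of "|underS r l|"] False
      by (simp add: Field_card_of card_of_card_order_on)
    then have "|A l| \<le>o |underS r l|" unfolding A_def using card_of_image ordLeq_transitive by blast
    then show ?thesis by blast
  qed
  show ?thesis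
  proof (rule exI[of _ A], rule exI[of _ B], intro conjI allI)
    fix l1 l2
    show "(l1, l2) \<in> r \<and> l1 \<noteq> l2 \<longrightarrow> A l1 \<subseteq> A l2 \<and> B l1 \<subseteq> B l2"
      unfolding A_def B_def using Xle_mono by blast
  next
    fix l
    show "A l \<subseteq> x_axis" unfolding A_def x_axis_def by auto
    show "B l \<subseteq> x_axis" unfolding B_def by simp
    show "A l \<inter> B l = {}" unfolding B_def by simp
    show "|A l| \<le>o |underS r l| \<or> |A l| \<le>o |UNIV :: nat set|" by (rule cardA)
    show "|B l| \<le>o |underS r l| \<or> |B l| \<le>o |UNIV :: nat set|" unfolding B_def using card_of_empty by blast
    show "|A l| <o |UNIV :: real set|" using small_image[OF Xle_small] unfolding small_def A_def .
    show "|B l| <o |UNIV :: real set|" using small_finite[of "B l"] unfolding small_def B_def by simp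
    have I: "Inv l" by (rule Inv)
    show "\<exists>z\<in>upper_half. \<forall>y\<in>a l. sees_via z y (A l)"
    proof (intro bexI[of _ "zf l"] ballI)
      show "zf l \<in> upper_half" using I unfolding Inv_def upper_half_def by simp
      fix y assume y: "y \<in> a l"
      have yl: "snd y < 0" using y a_in[of l] unfolding lower_half_def by auto
      have "proj (zf l) y \<in> Xle l" unfolding Xle_eq P_def using y by blast
      moreover have "snd (zf l) > 0" using I unfolding Inv_def by simp
      ultimately show "sees_via (zf l) y (A l)" unfolding A_def using sees_via_iff[OF _ yl] by blast
    qed
    show "\<not> (\<exists>z\<in>upper_half. \<forall>y\<in>K. sees_via z y (A l))"
    proof
      assume "\<exists>z\<in>upper_half. \<forall>y\<in>K. sees_via z y (A l)"
      then obtain z where z: "snd z > 0" "\<forall>y\<in>K. sees_via z y (A l)" unfolding upper_half_def by auto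
      have "\<forall>y\<in>K. proj z y \<in> Xle l"
      proof
        fix y assume y: "y \<in> K"
        have yl: "snd y < 0" using y K_sub unfolding lower_half_def by auto
        have "(proj z y, 0) \<in> A l" using z(2) y sees_via_iff[OF z(1) yl] by blast
        then show "proj z y \<in> Xle l" unfolding A_def by auto
      qed
      then have "seesK K (Xle l)" unfolding seesK_def using z(1) by blast
      then show False using I unfolding Inv_def by blast
    qed
  qed
qed

end
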